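(* Let $X$ be a complex Banach space, $\mathcal{F}$ an algebra with unit, $\Phi:\mathcal{F}\to\mathcal{C}(X)$ a calculus, and $\mathcal{E}\subseteq\mathrm{bdd}(\mathcal{F},\Phi)$ such that $\mathrm{bdd}(\mathcal{F},\Phi)$ is anchored in $\mathcal{E}$. Then $\mathcal{E}$ determines $\Phi$ on $\mathcal{F}$. If, in addition, $\mathcal{E}$ is multiplicative (closed under products), then $\mathcal{E}$ is an algebraic core for $\Phi$.
   Context: $\mathcal{F}$ need not be commutative. $\mathcal{L}(X)$, $\mathcal{C}(X)$: bounded, resp. closed linear operators on $X$; operator inclusions are graph inclusions, sums/products have natural domains, "$Tx=y$" means $x\in\mathrm{dom}(T)$, $Tx=y$. A proto-calculus is a map $\Phi:\mathcal{F}\to\mathcal{C}(X)$ with (FC1) $\Phi(\mathbf{1})=I$; (FC2) $\lambda\Phi(f)\subseteq\Phi(\lambda f)$, $\Phi(f)+\Phi(g)\subseteq\Phi(f+g)$; (FC3) $\Phi(f)\Phi(g)\subseteq\Phi(fg)$ with $\mathrm{dom}(\Phi(f)\Phi(g))=\mathrm{dom}(\Phi(g))\cap\mathrm{dom}(\Phi(fg))$. $\mathrm{bdd}(\mathcal{F},\Phi)=\{f:\Phi(f)\in\mathcal{L}(X)\}$. For a subset $\mathcal{E}\subseteq\mathcal{F}$ and $f\in\mathcal{F}$, $[f]_{\mathcal{E}}=\{e\in\mathcal{E}: ef\in\mathcal{E}\}$; $\mathrm{reg}(f,\Phi)=[f]_{\mathrm{bdd}(\mathcal{F},\Phi)}$.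 A subset $\mathcal{M}\subseteq\mathrm{bdd}(\mathcal{F},\Phi)$ determines $\Phi$ at $f$ if for all $x,y$: $\Phi(f)x=y\iff\Phi(ef)x=\Phi(e)y$ for all $e\in\mathcal{M}\cap\mathrm{reg}(f,\Phi)$; it determines $\Phi$ on $\mathcal{F}$ if it does so at every $f$. $\mathcal{E}\subseteq\mathrm{bdd}(\mathcal{F},\Phi)$ is an algebraic core for $\Phi$ if for every $f\in\mathcal{F}$: $\Phi(f)x=y\iff\Phi(ef)x=\Phi(e)y$ for all $e\in[f]_{\mathcal{E}}$. A calculus is a proto-calculus such that $\mathrm{bdd}(\mathcal{F},\Phi)$ determines $\Phi$ on $\mathcal{F}$. A nonempty $\mathcal{M}\subseteq\mathrm{bdd}(\mathcal{F},\Phi)$ is an anchor set if $\bigcap_{e\in\mathcal{M}}\ker\Phi(e)=\{0\}$; $g$ is anchored in $\mathcal{E}$ if $[g]_{\mathcal{E}}$ is an anchor set, and a set is anchored in $\mathcal{E}$ if each of its elements is. *)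

theory Defs
  imports "HOL-Analysis.Analysis"
begin

class scaleC =
  fixes scaleC :: "complex \<Rightarrow> 'a \<Rightarrow> 'a" (infixr \<open>*\<^sub>C\<close> 75)

class complex_vector = scaleC + ab_group_add +
  assumes scaleC_add_right: "a *\<^sub>C (x + y) = a *\<^sub>C x + a *\<^sub>C y"
    and scaleC_add_left: "(a + b) *\<^sub>C x = a *\<^sub>C x + b *\<^sub>C x"
    and scaleC_scaleC: "a *\<^sub>C (b *\<^sub>C x) = (a * b) *\<^sub>C x"
    and scaleC_one: "1 *\<^sub>C x = x"

class complex_normed_vector = complex_vector + real_normed_vector +
  assumes scaleR_scaleC: "scaleR r x = complex_of_real r *\<^sub>C x"
    and norm_scaleC: "norm (a *\<^sub>C x) = cmod a * norm x"

class complex_banach = complex_normed_vector + complete_space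

class complex_algebra_1 = complex_vector + ring_1 +
  assumes mult_scaleC_left: "(a *\<^sub>C x) * y = a *\<^sub>C (x * y)"
    and mult_scaleC_right: "x * (a *\<^sub>C y) = a *\<^sub>C (x * y)"

instantiation complex :: complex_banach
begin
definition scaleC_complex :: "complex \<Rightarrow> complex \<Rightarrow> complex" where "scaleC_complex a x = a * x"
instance
  by standard (auto simp: scaleC_complex_def algebra_simps scaleR_conv_of_real norm_mult)
end

instance complex :: complex_algebra_1
  by standard (auto simp: scaleC_complex_def)

text \<open>A (possibly unbounded) operator on X is identified with its graph, a subset of X \<times> X.
  Operator inclusion is graph inclusion; "T x = y" means (x, y) \<in> T.\<close>

definition op_dom :: "('x \<times> 'x) set \<Rightarrow> 'x set" where
  "op_dom T = fst ` T"

definition is_linop :: "('x::complex_vector \<times> 'x) set \<Rightarrow> bool" where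
  "is_linop T \<longleftrightarrow> (0, 0) \<in> T
     \<and> (\<forall>x y u v. (x, y) \<in> T \<longrightarrow> (u, v) \<in> T \<longrightarrow> (x + u, y + v) \<in> T)
     \<and> (\<forall>c x y. (x, y) \<in> T \<longrightarrow> (c *\<^sub>C x, c *\<^sub>C y) \<in> T)
     \<and> (\<forall>x y z. (x, y) \<in> T \<longrightarrow> (x, z) \<in> T \<longrightarrow> y = z)"

definition closed_op :: "('x::complex_banach \<times> 'x) set \<Rightarrow> bool" where
  "closed_op T \<longleftrightarrow> is_linop T \<and> closed T"

definition bdd_op :: "('x::complex_banach \<times> 'x) set \<Rightarrow> bool" where
  "bdd_op T \<longleftrightarrow> (\<exists>A. bounded_linear A \<and> (\<forall>c x. A (c *\<^sub>C x) = c *\<^sub>C A x)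
                      \<and> T = range (\<lambda>x. (x, A x)))"

definition op_id :: "('x \<times> 'x) set" where
  "op_id = {(x, x) | x. True}"

definition op_scale :: "complex \<Rightarrow> ('x::complex_vector \<times> 'x) set \<Rightarrow> ('x \<times> 'x) set" where
  "op_scale c T = {(x, c *\<^sub>C y) | x y. (x, y) \<in> T}"

definition op_plus :: "('x::complex_vector \<times> 'x) set \<Rightarrow> ('x \<times> 'x) set \<Rightarrow> ('x \<times> 'x) set" where
  "op_plus S T = {(x, y + z) | x y z. (x, y) \<in> S \<and> (x, z) \<in> T}"

text \<open>Product S T (first apply T, then S), with natural domain.\<close>
definition op_comp :: "('x \<times> 'x) set \<Rightarrow> ('x \<times> 'x) set \<Rightarrow> ('x \<times> 'x) set" where
  "op_comp S T = {(x, z) | x y z. (x, y) \<in> T \<and> (y, z) \<in> S}"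

definition proto_calculus :: "('f::complex_algebra_1 \<Rightarrow> ('x::complex_banach \<times> 'x) set) \<Rightarrow> bool" where
  "proto_calculus \<Phi> \<longleftrightarrow>
     (\<forall>f. closed_op (\<Phi> f))
   \<and> \<Phi> 1 = op_id
   \<and> (\<forall>c f. op_scale c (\<Phi> f) \<subseteq> \<Phi> (c *\<^sub>C f))
   \<and> (\<forall>f g. op_plus (\<Phi> f) (\<Phi> g) \<subseteq> \<Phi> (f + g))
   \<and> (\<forall>f g. op_comp (\<Phi> f) (\<Phi> g) \<subseteq> \<Phi> (f * g)
            \<and> op_dom (op_comp (\<Phi> f) (\<Phi> g)) = op_dom (\<Phi> g) \<inter> op_dom (\<Phi> (f * g)))"

definition bdd :: "('f::complex_algebra_1 \<Rightarrow> ('x::complex_banach \<times> 'x) set) \<Rightarrow> 'f set" where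
  "bdd \<Phi> = {f. bdd_op (\<Phi> f)}"

definition bracket :: "'f::times \<Rightarrow> 'f set \<Rightarrow> 'f set" where
  "bracket f E = {e \<in> E. e * f \<in> E}"

definition reg :: "'f::complex_algebra_1 \<Rightarrow> ('f \<Rightarrow> ('x::complex_banach \<times> 'x) set) \<Rightarrow> 'f set" where
  "reg f \<Phi> = bracket f (bdd \<Phi>)"

text \<open>"\<Phi>(e f) x = \<Phi>(e) y": x \<in> dom \<Phi>(ef), y \<in> dom \<Phi>(e), and the values agree.\<close>
definition determines_at :: "('f::complex_algebra_1 \<Rightarrow> ('x::complex_banach \<times> 'x) set) \<Rightarrow> 'f set \<Rightarrow> 'f \<Rightarrow> bool" where
  "determines_at \<Phi> M f \<longleftrightarrow>
     (\<forall>x y. (x, y) \<in> \<Phi> f \<longleftrightarrow>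
        (\<forall>e \<in> M \<inter> reg f \<Phi>. \<exists>z. (x, z) \<in> \<Phi> (e * f) \<and> (y, z) \<in> \<Phi> e))"

definition determines :: "('f::complex_algebra_1 \<Rightarrow> ('x::complex_banach \<times> 'x) set) \<Rightarrow> 'f set \<Rightarrow> bool" where
  "determines \<Phi> M \<longleftrightarrow> M \<subseteq> bdd \<Phi> \<and> (\<forall>f. determines_at \<Phi> M f)"

definition algebraic_core :: "('f::complex_algebra_1 \<Rightarrow> ('x::complex_banach \<times> 'x) set) \<Rightarrow> 'f set \<Rightarrow> bool" where
  "algebraic_core \<Phi> E \<longleftrightarrow> E \<subseteq> bdd \<Phi> \<and>
     (\<forall>f x y. (x, y) \<in> \<Phi> f \<longleftrightarrow>
        (\<forall>e \<in> bracket f E. \<exists>z. (x, z) \<in> \<Phi> (e * f) \<and> (y, z) \<in> \<Phi> e))"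

definition calculus :: "('f::complex_algebra_1 \<Rightarrow> ('x::complex_banach \<times> 'x) set) \<Rightarrow> bool" where
  "calculus \<Phi> \<longleftrightarrow> proto_calculus \<Phi> \<and> determines \<Phi> (bdd \<Phi>)"

definition anchor_set :: "('f::complex_algebra_1 \<Rightarrow> ('x::complex_banach \<times> 'x) set) \<Rightarrow> 'f set \<Rightarrow> bool" where
  "anchor_set \<Phi> M \<longleftrightarrow> M \<noteq> {} \<and> M \<subseteq> bdd \<Phi> \<and> (\<forall>x. (\<forall>e \<in> M. (x, 0) \<in> \<Phi> e) \<longrightarrow> x = 0)"

definition anchored_in :: "('f::complex_algebra_1 \<Rightarrow> ('x::complex_banach \<times> 'x) set) \<Rightarrow> 'f \<Rightarrow> 'f set \<Rightarrow> bool" where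
  "anchored_in \<Phi> g E \<longleftrightarrow> anchor_set \<Phi> (bracket g E)"

definition set_anchored_in :: "('f::complex_algebra_1 \<Rightarrow> ('x::complex_banach \<times> 'x) set) \<Rightarrow> 'f set \<Rightarrow> 'f set \<Rightarrow> bool" where
  "set_anchored_in \<Phi> S E \<longleftrightarrow> (\<forall>g \<in> S. anchored_in \<Phi> g E)"

definition multiplicative :: "'f::times set \<Rightarrow> bool" where
  "multiplicative E \<longleftrightarrow> (\<forall>a \<in> E. \<forall>b \<in> E. a * b \<in> E)"

end

theory Submission
  imports Defs
begin

lemma bdd_opD:
  assumes "bdd_op T"
  obtains A where "\<And>a b. (a, b) \<in> T \<longleftrightarrow> b = A a" "\<And>u w. A (u - w) = A u - A w"
proof -
  from assms obtain A where A: "bounded_linear A" "T = range (\<lambda>x. (x, A x))"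
    unfolding bdd_op_def by blast
  show ?thesis
    by (rule that[of A]) (auto simp: A linear_diff[OF bounded_linear.linear[OF A(1)]])
qed

lemma pc_comp:
  assumes "proto_calculus \<Phi>" "(a, b) \<in> \<Phi> h" "(b, c) \<in> \<Phi> e"
  shows "(a, c) \<in> \<Phi> (e * h)"
proof -
  have "(a, c) \<in> op_comp (\<Phi> e) (\<Phi> h)" using assms(2,3) unfolding op_comp_def by blast
  moreover have "op_comp (\<Phi> e) (\<Phi> h) \<subseteq> \<Phi> (e * h)"
    using assms(1) unfolding proto_calculus_def by simp
  ultimately show ?thesis by (rule subsetD[rotated])
qed

lemma pc_func:
  assumes "proto_calculus \<Phi>" "(a, b) \<in> \<Phi> h" "(a, c) \<in> \<Phi> h"
  shows "b = c"
proof -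
  have "is_linop (\<Phi> h)" using assms(1) unfolding proto_calculus_def closed_op_def by simp
  then have "\<forall>x y z. (x, y) \<in> \<Phi> h \<longrightarrow> (x, z) \<in> \<Phi> h \<longrightarrow> y = z"
    unfolding is_linop_def by simp
  then show ?thesis using assms(2,3) by simp
qed

lemma bdd_mult:
  assumes pc: "proto_calculus \<Phi>" and a: "a \<in> bdd \<Phi>" and b: "b \<in> bdd \<Phi>"
  shows "a * b \<in> bdd \<Phi>"
proof -
  from a obtain A where A: "bounded_linear A" "\<forall>c x. A (c *\<^sub>C x) = c *\<^sub>C A x"
    "\<Phi> a = range (\<lambda>x. (x, A x))"
    unfolding bdd_def bdd_op_def by blast
  from b obtain B where B: "bounded_linear B" "\<forall>c x. B (c *\<^sub>C x) = c *\<^sub>C B x"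
    "\<Phi> b = range (\<lambda>x. (x, B x))"
    unfolding bdd_def bdd_op_def by blast
  have in1: "(x, A (B x)) \<in> \<Phi> (a * b)" for x
    by (rule pc_comp[OF pc, of x "B x"]) (auto simp: A B)
  have "\<Phi> (a * b) = range (\<lambda>x. (x, (A \<circ> B) x))"
  proof
    show "\<Phi> (a * b) \<subseteq> range (\<lambda>x. (x, (A \<circ> B) x))"
    proof
      fix p assume "p \<in> \<Phi> (a * b)"
      then obtain u v where p: "p = (u, v)" "(u, v) \<in> \<Phi> (a * b)" by (cases p) auto
      then have "v = A (B u)" using pc_func[OF pc p(2) in1] by simp
      then show "p \<in> range (\<lambda>x. (x, (A \<circ> B) x))" using p by auto
    qed
    show "range (\<lambda>x. (x, (A \<circ> B) x)) \<subseteq> \<Phi> (a * b)" using in1 by auto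
  qed
  moreover have "bounded_linear (A \<circ> B)"
    using bounded_linear_compose[OF A(1) B(1)] by (simp add: comp_def)
  moreover have "\<forall>c x. (A \<circ> B) (c *\<^sub>C x) = c *\<^sub>C (A \<circ> B) x" using A(2) B(2) by simp
  ultimately show ?thesis unfolding bdd_def bdd_op_def by blast
qed

lemma key:
  assumes pc: "proto_calculus \<Phi>" and g: "g \<in> bdd \<Phi>" and gf: "g * f \<in> bdd \<Phi>"
    and anch: "anchor_set \<Phi> S"
    and hyp: "\<forall>e\<in>S. \<exists>z. (x, z) \<in> \<Phi> (e * (g * f)) \<and> (y, z) \<in> \<Phi> (e * g)"
  shows "\<exists>z. (x, z) \<in> \<Phi> (g * f) \<and> (y, z) \<in> \<Phi> g"
proof -
  from g have "bdd_op (\<Phi> g)" by (simp add: bdd_def)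
  then obtain A where A: "\<And>a b. (a, b) \<in> \<Phi> g \<longleftrightarrow> b = A a"
    "\<And>u w. A (u - w) = A u - A w"
    using bdd_opD by metis
  from gf have "bdd_op (\<Phi> (g * f))" by (simp add: bdd_def)
  then obtain B where B: "\<And>a b. (a, b) \<in> \<Phi> (g * f) \<longleftrightarrow> b = B a"
    "\<And>u w. B (u - w) = B u - B w"
    using bdd_opD by metis
  have "\<forall>e\<in>S. (B x - A y, 0) \<in> \<Phi> e"
  proof
    fix e assume e: "e \<in> S"
    then have "e \<in> bdd \<Phi>" using anch unfolding anchor_set_def by blast
    then have "bdd_op (\<Phi> e)" by (simp add: bdd_def)
    then obtain C where C: "\<And>a b. (a, b) \<in> \<Phi> e \<longleftrightarrow> b = C a"
      "\<And>u w. C (u - w) = C u - C w"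
      using bdd_opD by metis
    from hyp e obtain z where z: "(x, z) \<in> \<Phi> (e * (g * f))" "(y, z) \<in> \<Phi> (e * g)" by blast
    have "(x, C (B x)) \<in> \<Phi> (e * (g * f))" by (rule pc_comp[OF pc]) (auto simp: B C)
    with z(1) have 1: "C (B x) = z" using pc_func[OF pc] by blast
    have "(y, C (A y)) \<in> \<Phi> (e * g)" by (rule pc_comp[OF pc]) (auto simp: A C)
    with z(2) have 2: "C (A y) = z" using pc_func[OF pc] by blast
    show "(B x - A y, 0) \<in> \<Phi> e" using 1 2 by (simp add: C)
  qed
  then have "B x - A y = 0" using anch unfolding anchor_set_def by blast
  then show ?thesis using A B by auto
qed

theorem theorem4p2:
  fixes \<Phi> :: "'f::complex_algebra_1 \<Rightarrow> ('x::complex_banach \<times> 'x) set"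
    and E :: "'f set"
  assumes "calculus \<Phi>"
    and "E \<subseteq> bdd \<Phi>"
    and "set_anchored_in \<Phi> (bdd \<Phi>) E"
  shows "determines \<Phi> E \<and> (multiplicative E \<longrightarrow> algebraic_core \<Phi> E)"
proof -
  have pc: "proto_calculus \<Phi>" using assms(1) unfolding calculus_def by blast
  have detB: "\<And>f x y. (x, y) \<in> \<Phi> f \<longleftrightarrow>
        (\<forall>e \<in> bdd \<Phi> \<inter> reg f \<Phi>. \<exists>z. (x, z) \<in> \<Phi> (e * f) \<and> (y, z) \<in> \<Phi> e)"
    using assms(1) unfolding calculus_def determines_def determines_at_def by blast
  have anc: "\<And>g. g \<in> bdd \<Phi> \<Longrightarrow> anchor_set \<Phi> (bracket g E)"
    using assms(3) unfolding set_anchored_in_def anchored_in_def by blast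
  have detE: "\<And>f x y. (x, y) \<in> \<Phi> f \<longleftrightarrow>
        (\<forall>e \<in> E \<inter> reg f \<Phi>. \<exists>z. (x, z) \<in> \<Phi> (e * f) \<and> (y, z) \<in> \<Phi> e)"
  proof
    fix f x y
    assume "(x, y) \<in> \<Phi> f"
    then show "\<forall>e \<in> E \<inter> reg f \<Phi>. \<exists>z. (x, z) \<in> \<Phi> (e * f) \<and> (y, z) \<in> \<Phi> e"
      using detB assms(2) by blast
  next
    fix f x y
    assume H: "\<forall>e \<in> E \<inter> reg f \<Phi>. \<exists>z. (x, z) \<in> \<Phi> (e * f) \<and> (y, z) \<in> \<Phi> e"
    have "\<forall>g \<in> bdd \<Phi> \<inter> reg f \<Phi>. \<exists>z. (x, z) \<in> \<Phi> (g * f) \<and> (y, z) \<in> \<Phi> g"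
    proof
      fix g assume g: "g \<in> bdd \<Phi> \<inter> reg f \<Phi>"
      then have g1: "g \<in> bdd \<Phi>" and g2: "g * f \<in> bdd \<Phi>"
        unfolding reg_def bracket_def by auto
      show "\<exists>z. (x, z) \<in> \<Phi> (g * f) \<and> (y, z) \<in> \<Phi> g"
      proof (rule key[OF pc g1 g2 anc[OF g1]], intro ballI)
        fix e assume e: "e \<in> bracket g E"
        then have eE: "e \<in> E" and egE: "e * g \<in> E" unfolding bracket_def by auto
        have "e \<in> bdd \<Phi>" using eE assms(2) by blast
        then have "e * (g * f) \<in> bdd \<Phi>" using bdd_mult[OF pc _ g2] by blast
        then have "e * g \<in> E \<inter> reg f \<Phi>"
          using egE assms(2) unfolding reg_def bracket_def by (auto simp: mult.assoc)
        then obtain z where "(x, z) \<in> \<Phi> (e * g * f)" "(y, z) \<in> \<Phi> (e * g)" using H by blast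
        then show "\<exists>z. (x, z) \<in> \<Phi> (e * (g * f)) \<and> (y, z) \<in> \<Phi> (e * g)"
          by (auto simp: mult.assoc)
      qed
    qed
    then show "(x, y) \<in> \<Phi> f" using detB by blast
  qed
  have D: "determines \<Phi> E"
    unfolding determines_def determines_at_def using assms(2) detE by blast
  have C: "algebraic_core \<Phi> E" if mult: "multiplicative E"
    unfolding algebraic_core_def
  proof (intro conjI allI)
    show "E \<subseteq> bdd \<Phi>" by fact
    fix f x y
    show "(x, y) \<in> \<Phi> f \<longleftrightarrow>
        (\<forall>e \<in> bracket f E. \<exists>z. (x, z) \<in> \<Phi> (e * f) \<and> (y, z) \<in> \<Phi> e)"
    proof
      assume "(x, y) \<in> \<Phi> f"
      moreover have "bracket f E \<subseteq> E \<inter> reg f \<Phi>"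
        using assms(2) unfolding reg_def bracket_def by auto
      ultimately show "\<forall>e \<in> bracket f E. \<exists>z. (x, z) \<in> \<Phi> (e * f) \<and> (y, z) \<in> \<Phi> e"
        using detE by blast
    next
      assume H: "\<forall>e \<in> bracket f E. \<exists>z. (x, z) \<in> \<Phi> (e * f) \<and> (y, z) \<in> \<Phi> e"
      have "\<forall>g \<in> E \<inter> reg f \<Phi>. \<exists>z. (x, z) \<in> \<Phi> (g * f) \<and> (y, z) \<in> \<Phi> g"
      proof
        fix g assume g: "g \<in> E \<inter> reg f \<Phi>"
        then have g1: "g \<in> bdd \<Phi>" and g2: "g * f \<in> bdd \<Phi>" and gE: "g \<in> E"
          unfolding reg_def bracket_def by auto
        show "\<exists>z. (x, z) \<in> \<Phi> (g * f) \<and> (y, z) \<in> \<Phi> g"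
        proof (rule key[OF pc g1 g2 anc[OF g2]], intro ballI)
          fix e assume e: "e \<in> bracket (g * f) E"
          then have eE: "e \<in> E" and egE: "e * (g * f) \<in> E" unfolding bracket_def by auto
          have "e * g \<in> E" using mult eE gE unfolding multiplicative_def by blast
          then have "e * g \<in> bracket f E" using egE unfolding bracket_def
            by (auto simp: mult.assoc)
          then obtain z where "(x, z) \<in> \<Phi> (e * g * f)" "(y, z) \<in> \<Phi> (e * g)" using H by blast
          then show "\<exists>z. (x, z) \<in> \<Phi> (e * (g * f)) \<and> (y, z) \<in> \<Phi> (e * g)"
            by (auto simp: mult.assoc)
        qed
      qed
      then show "(x, y) \<in> \<Phi> f" using detE by blast
    qed
  qed
  show ?thesis using D C by blast
qed

end
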